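(* Let $\nu\ge3$ be a square-free integer with $\nu\equiv2$ or $3\pmod 4$. Define $x_0=0$ and $x_{n+1}=\sqrt{\nu+x_n}$. Let $n\ge1$ and let $p$ be a prime divisor of $\nu$. For any maximal ideal $\mathcal{P}\subseteq\mathbb{Z}[x_n]$ with $\mathcal{P}\cap\mathbb{Z}=p\mathbb{Z}$, the localization of $\mathbb{Z}[x_n]$ at $\mathcal{P}$ is a discrete valuation ring.
   Context: Square roots are the positive real ones. *)

theory Defs
  imports "HOL-Computational_Algebra.Computational_Algebra" "HOL-Algebra.Ring_Divisibility"
begin

fun nest :: "int \<Rightarrow> nat \<Rightarrow> real" where
  "nest nu 0 = 0"
| "nest nu (Suc n) = sqrt (of_int nu + nest nu n)"

definition Zadj :: "real \<Rightarrow> real set" where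
  "Zadj a = {poly (map_poly real_of_int q) a | q. True}"

definition ring_of :: "real set \<Rightarrow> real ring" where
  "ring_of S = \<lparr>carrier = S, monoid.mult = (*), one = 1, zero = 0, add = (+)\<rparr>"

text \<open>Localization of a subring S of the reals at a prime ideal P, realised inside the reals
  (which contain the fraction field of S).\<close>
definition localization :: "real set \<Rightarrow> real set \<Rightarrow> real set" where
  "localization S P = {a / b | a b. a \<in> S \<and> b \<in> S - P}"

definition DVR :: "('a, 'b) ring_scheme \<Rightarrow> bool" where
  "DVR R \<longleftrightarrow> principal_domain R \<and>
     (\<exists>!P. primeideal P R \<and> P \<noteq> {\<zero>\<^bsub>R\<^esub>})"

end

theory Submission
  imports Defs
begin


lemma real_domain:
  fixes T :: "real set"
  assumes add: "\<And>a b. a \<in> T \<Longrightarrow> b \<in> T \<Longrightarrow> a + b \<in> T"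
    and mult: "\<And>a b. a \<in> T \<Longrightarrow> b \<in> T \<Longrightarrow> a * b \<in> T"
    and neg: "\<And>a. a \<in> T \<Longrightarrow> - a \<in> T"
    and zero: "0 \<in> T" and one: "1 \<in> T"
  shows "domain (ring_of T)"
proof -
  have ag: "abelian_group (ring_of T)"
    by (rule abelian_groupI) (auto simp: ring_of_def add zero intro!: bexI[of _ "- _"] neg)
  have cm: "comm_monoid (ring_of T)"
    by (rule comm_monoidI) (auto simp: ring_of_def mult one)
  have cr: "cring (ring_of T)"
    by (rule cringI[OF ag cm]) (auto simp: ring_of_def distrib_right)
  show ?thesis
    by (rule domain.intro[OF cr]) (unfold_locales, auto simp: ring_of_def)
qed



locale LL =
  fixes S P :: "real set"
  assumes S_add: "a \<in> S \<Longrightarrow> b \<in> S \<Longrightarrow> a + b \<in> S"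
  and S_mult: "a \<in> S \<Longrightarrow> b \<in> S \<Longrightarrow> a * b \<in> S"
  and S_neg: "a \<in> S \<Longrightarrow> - a \<in> S"
  and S_int: "of_int c \<in> S"
  and P_S: "P \<subseteq> S"
  and P_add: "a \<in> P \<Longrightarrow> b \<in> P \<Longrightarrow> a + b \<in> P"
  and P_neg: "a \<in> P \<Longrightarrow> - a \<in> P"
  and P_mult: "a \<in> P \<Longrightarrow> s \<in> S \<Longrightarrow> s * a \<in> P"
  and P_prime: "a \<in> S \<Longrightarrow> b \<in> S \<Longrightarrow> a * b \<in> P \<Longrightarrow> a \<in> P \<or> b \<in> P"
  and one_P: "1 \<notin> P" and zero_P: "0 \<in> P"
begin

abbreviation "L \<equiv> localization S P"

lemma S0: "0 \<in> S" "1 \<in> S" using S_int[of 0] S_int[of 1] by auto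

lemma S_pow: "a \<in> S \<Longrightarrow> a ^ k \<in> S"
  by (induction k) (auto simp: S0 S_mult)

lemma P_pow: "a \<in> P \<Longrightarrow> k \<ge> 1 \<Longrightarrow> a ^ k \<in> P"
proof (induction k)
  case (Suc k) thus ?case
    using P_S P_mult[of a "a^k"] S_pow by (cases k) (auto simp: mult.commute)
qed simp

lemma P_pow_rev: "a \<in> S \<Longrightarrow> a ^ k \<in> P \<Longrightarrow> a \<in> P"
proof (induction k)
  case 0 thus ?case using one_P by simp
next
  case (Suc k) thus ?case using P_prime[of a "a^k"] S_pow by auto
qed

lemma SP_mult: "a \<in> S - P \<Longrightarrow> b \<in> S - P \<Longrightarrow> a * b \<in> S - P"
  using P_prime S_mult by auto

lemma SP_nz: "b \<in> S - P \<Longrightarrow> b \<noteq> 0" using zero_P by auto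

lemma L_iff: "w \<in> L \<longleftrightarrow> (\<exists>a b. a \<in> S \<and> b \<in> S - P \<and> w = a / b)"
  by (auto simp: localization_def)

lemma S_L: "a \<in> S \<Longrightarrow> a \<in> L"
  unfolding L_iff using S0 one_P by (intro exI[of _ a] exI[of _ 1]) auto

lemma L_add: assumes "w \<in> L" "z \<in> L" shows "w + z \<in> L"
proof -
  obtain a b c d where ab: "a \<in> S" "b \<in> S - P" "w = a / b" and cd: "c \<in> S" "d \<in> S - P" "z = c / d"
    using assms unfolding L_iff by blast
  have "w + z = (a * d + c * b) / (b * d)" using SP_nz ab cd by (simp add: field_simps)
  moreover have "a * d + c * b \<in> S" "b * d \<in> S - P" using ab cd SP_mult S_add S_mult by auto
  ultimately show ?thesis unfolding L_iff by blast
qed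

lemma L_mult: assumes "w \<in> L" "z \<in> L" shows "w * z \<in> L"
proof -
  obtain a b c d where ab: "a \<in> S" "b \<in> S - P" "w = a / b" and cd: "c \<in> S" "d \<in> S - P" "z = c / d"
    using assms unfolding L_iff by blast
  have "w * z = (a * c) / (b * d)" using ab cd by simp
  moreover have "a * c \<in> S" "b * d \<in> S - P" using ab cd SP_mult S_mult by auto
  ultimately show ?thesis unfolding L_iff by blast
qed

lemma L_neg: assumes "w \<in> L" shows "- w \<in> L"
proof -
  obtain a b where ab: "a \<in> S" "b \<in> S - P" "w = a / b" using assms unfolding L_iff by blast
  have "- w = (- a) / b" using ab by simp
  moreover have "- a \<in> S" using ab S_neg by auto
  ultimately show ?thesis unfolding L_iff using ab by blast
qed

lemma L_pow: "a \<in> L \<Longrightarrow> a ^ k \<in> L"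
  by (induction k) (auto simp: S0 S_L L_mult)

lemma L_domain: "domain (ring_of L)"
  by (rule real_domain) (auto simp: L_add L_mult L_neg S_L S0)

definition unitL :: "real \<Rightarrow> bool" where
  "unitL u \<longleftrightarrow> (\<exists>s t. s \<in> S - P \<and> t \<in> S - P \<and> u = s / t)"

lemma unitL_S: "s \<in> S - P \<Longrightarrow> unitL s"
  unfolding unitL_def using S0 one_P by (intro exI[of _ s] exI[of _ 1]) auto

lemma unitL_1: "unitL 1" using unitL_S S0 one_P by auto

lemma unitL_L: "unitL u \<Longrightarrow> u \<in> L"
  unfolding unitL_def L_iff by blast

lemma unitL_nz: "unitL u \<Longrightarrow> u \<noteq> 0"
  unfolding unitL_def using SP_nz by (metis Diff_iff divide_eq_0_iff)

lemma unitL_inv: "unitL u \<Longrightarrow> unitL (1 / u)"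
  unfolding unitL_def by (metis divide_divide_eq_right div_by_1 mult.commute divide_divide_eq_left)

lemma unitL_mult: assumes "unitL u" "unitL v" shows "unitL (u * v)"
proof -
  obtain a b c d where ab: "a \<in> S - P" "b \<in> S - P" "u = a / b" and cd: "c \<in> S - P" "d \<in> S - P" "v = c / d"
    using assms unfolding unitL_def by blast
  have "u * v = (a * c) / (b * d)" using ab cd by simp
  moreover have "a * c \<in> S - P" "b * d \<in> S - P" using ab cd SP_mult by auto
  ultimately show ?thesis unfolding unitL_def by blast
qed

lemma unitL_div: "unitL u \<Longrightarrow> unitL v \<Longrightarrow> unitL (u / v)"
  using unitL_mult[OF _ unitL_inv, of u v] by simp

lemma unitL_pow: "unitL u \<Longrightarrow> unitL (u ^ k)"
  by (induction k) (auto simp: unitL_1 unitL_mult)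

lemma unitL_add: assumes "unitL u" "y \<in> L" "z \<in> P" shows "unitL (u + z * y)"
proof -
  obtain s t where st: "s \<in> S - P" "t \<in> S - P" "u = s / t" using assms unfolding unitL_def by blast
  obtain c d where cd: "c \<in> S" "d \<in> S - P" "y = c / d" using assms unfolding L_iff by blast
  have zS: "z \<in> S" using assms P_S by auto
  have e: "u + z * y = (s * d + z * c * t) / (t * d)" using st cd SP_nz by (simp add: field_simps)
  have sd: "s * d \<in> S - P" using SP_mult st cd by auto
  have zct: "z * c * t \<in> P" using P_mult[OF assms(3), of "c * t"] st cd S_mult by (simp add: mult_ac)
  have "s * d + z * c * t \<notin> P"
  proof
    assume "s * d + z * c * t \<in> P"
    from P_add[OF this P_neg[OF zct]] sd show False by simp
  qed
  moreover have "s * d + z * c * t \<in> S" using sd zct P_S S_add by auto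
  moreover have "t * d \<in> S - P" using SP_mult st cd by auto
  ultimately show ?thesis unfolding unitL_def using e by blast
qed

lemma P_not_inv: assumes "z \<in> P" "z \<noteq> 0" shows "1 / z \<notin> L"
proof
  assume "1 / z \<in> L"
  then obtain a b where ab: "a \<in> S" "b \<in> S - P" "1 / z = a / b" unfolding L_iff by blast
  hence "b = a * z" using assms SP_nz[OF ab(2)] by (simp add: field_simps)
  thus False using P_mult[OF assms(1) ab(1)] ab by simp
qed

end



locale LLx = LL +
  fixes x :: real
  assumes x_P: "x \<in> P" and x_nz: "x \<noteq> 0"
begin

lemma x_S: "x \<in> S" using x_P P_S by auto
lemma x_L: "x \<in> L" using x_S S_L by auto

definition VF :: "real \<Rightarrow> nat \<Rightarrow> bool" where
  "VF w m \<longleftrightarrow> (\<exists>u. unitL u \<and> w = x ^ m * u)"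

lemma VF_unit: "unitL u \<Longrightarrow> VF u 0" unfolding VF_def by auto

lemma VF_mult: assumes "VF a i" "VF b j" shows "VF (a * b) (i + j)"
proof -
  obtain u v where "unitL u" "a = x ^ i * u" "unitL v" "b = x ^ j * v" using assms unfolding VF_def by blast
  thus ?thesis unfolding VF_def
    by (intro exI[of _ "u * v"]) (auto simp: unitL_mult power_add mult_ac)
qed

lemma VF_add_lt: assumes "VF a i" "VF b j" "i < j" shows "VF (a + b) i"
proof -
  obtain u v where uv: "unitL u" "a = x ^ i * u" "unitL v" "b = x ^ j * v" using assms unfolding VF_def by blast
  obtain d where d: "j = i + Suc d" using assms(3) less_iff_Suc_add by auto
  have "a + b = x ^ i * (u + x * (x ^ d * v))" using uv d by (simp add: power_add algebra_simps)
  moreover have "unitL (u + x * (x ^ d * v))"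
    by (rule unitL_add) (use uv x_P x_L L_pow L_mult unitL_L in auto)
  ultimately show ?thesis unfolding VF_def by blast
qed

lemma VF_add: assumes "VF a i" "VF b j" "i \<noteq> j" shows "VF (a + b) (min i j)"
  using VF_add_lt[OF assms(1,2)] VF_add_lt[OF assms(2,1)] assms(3)
  by (cases "i < j") (auto simp: add.commute min_def)

lemma VF_sum:
  assumes "finite I" "I \<noteq> {}" "\<And>i. i \<in> I \<Longrightarrow> VF (t i) (k i)" "inj_on k I"
  shows "\<exists>m \<in> k ` I. VF (sum t I) m"
  using assms
proof (induction I rule: finite_ne_induct)
  case (singleton a) thus ?case by auto
next
  case (insert a F)
  then obtain m where m: "m \<in> k ` F" "VF (sum t F) m" by auto
  have "k a \<noteq> m" using insert.prems(2) insert.hyps m(1) by (auto simp: inj_on_def)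
  hence "VF (t a + sum t F) (min (k a) m)" using VF_add insert.prems(1) m(2) by auto
  moreover have "min (k a) m \<in> k ` insert a F" using m(1) by (auto simp: min_def)
  ultimately show ?case using insert.hyps by auto
qed

end

locale LLd = LLx +
  assumes key: "a \<in> S \<Longrightarrow> a \<noteq> 0 \<Longrightarrow> \<exists>m. VF a m"
begin

lemma keyL: assumes "w \<in> L" "w \<noteq> 0" shows "\<exists>k u. unitL u \<and> w = x ^ k * u"
proof -
  obtain a b where ab: "a \<in> S" "b \<in> S - P" "w = a / b" using assms unfolding L_iff by blast
  have "a \<noteq> 0" using ab assms by auto
  then obtain m u where "unitL u" "a = x ^ m * u" using key ab unfolding VF_def by blast
  moreover have "unitL (u / b)" using unitL_div[OF \<open>unitL u\<close> unitL_S[OF ab(2)]] .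
  ultimately show ?thesis using ab by (intro exI[of _ m] exI[of _ "u / b"]) auto
qed

lemma x_not_unit: "1 / x \<notin> L" using P_not_inv x_P x_nz by auto

abbreviation "R \<equiv> ring_of L"

lemma R_simps [simp]: "carrier R = L" "mult R = (*)" "zero R = 0" "one R = 1" "add R = (+)"
  by (auto simp: ring_of_def)

lemma unit_in_ideal: assumes "ideal I R" "unitL u" "u \<in> I" shows "I = L"
proof -
  interpret ideal I R by fact
  have "y \<in> I" if "y \<in> L" for y
  proof -
    have "(y / u) * u \<in> I" using I_l_closed[of u "y / u"] assms that unitL_inv L_mult unitL_L
      by (metis R_simps(1,2) divide_inverse inverse_eq_divide)
    thus ?thesis using unitL_nz[OF assms(2)] by simp
  qed
  moreover have "I \<subseteq> L" using a_subset by simp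
  ultimately show ?thesis by auto
qed

lemma principal: "principal_domain R"
proof (rule principal_domain.intro[OF L_domain], unfold_locales)
  fix I assume I: "ideal I R"
  interpret ideal I R by fact
  show "\<exists>a\<in>carrier R. I = PIdl\<^bsub>R\<^esub> a"
  proof (cases "I \<subseteq> {0}")
    case True
    hence "I = {0}" using I additive_subgroup.zero_closed[OF is_additive_subgroup] by auto
    moreover have "PIdl\<^bsub>R\<^esub> 0 = {0}" unfolding cgenideal_def using S0 S_L by auto
    ultimately show ?thesis using S0 S_L by auto
  next
    case False
    then obtain w where w: "w \<in> I" "w \<noteq> 0" by auto
    have wL: "w \<in> L" using w a_subset by auto
    define K where "K = {k. \<exists>u. unitL u \<and> x ^ k * u \<in> I}"
    have "K \<noteq> {}" using keyL[OF wL w(2)] w unfolding K_def by auto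
    define k0 where "k0 = Least (\<lambda>k. k \<in> K)"
    have "k0 \<in> K" unfolding k0_def using \<open>K \<noteq> {}\<close> by (metis LeastI ex_in_conv)
    then obtain u0 where u0: "unitL u0" "x ^ k0 * u0 \<in> I" unfolding K_def by auto
    have xk0: "x ^ k0 \<in> I"
    proof -
      have "(1 / u0) * (x ^ k0 * u0) \<in> I"
        using I_l_closed[OF u0(2), of "1 / u0"] unitL_inv[OF u0(1)] unitL_L by simp
      thus ?thesis using unitL_nz[OF u0(1)] by simp
    qed
    have "I = PIdl\<^bsub>R\<^esub> (x ^ k0)"
    proof
      show "PIdl\<^bsub>R\<^esub> (x ^ k0) \<subseteq> I" unfolding cgenideal_def using I_l_closed[OF xk0] by auto
    next
      show "I \<subseteq> PIdl\<^bsub>R\<^esub> (x ^ k0)"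
      proof
        fix z assume z: "z \<in> I"
        show "z \<in> PIdl\<^bsub>R\<^esub> (x ^ k0)"
        proof (cases "z = 0")
          case True thus ?thesis unfolding cgenideal_def using S0 S_L by force
        next
          case False
          have zL: "z \<in> L" using z a_subset by auto
          obtain k u where ku: "unitL u" "z = x ^ k * u" using keyL[OF zL False] by blast
          have "k \<in> K" using ku z unfolding K_def by auto
          hence "k0 \<le> k" unfolding k0_def by (rule Least_le)
          hence "z = (x ^ (k - k0) * u) * x ^ k0" using ku by (simp add: power_add[symmetric] mult_ac)
          moreover have "x ^ (k - k0) * u \<in> L" using L_mult L_pow x_L unitL_L ku by auto
          ultimately show ?thesis unfolding cgenideal_def by auto
        qed
      qed
    qed
    thus ?thesis using L_pow x_L by auto
  qed
qed

definition Xi where "Xi = {y * x | y. y \<in> L}"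

lemma one_not_Xi: "1 \<notin> Xi"
proof
  assume "1 \<in> Xi"
  then obtain y where "y \<in> L" "1 = y * x" unfolding Xi_def by auto
  hence "1 / x = y" using x_nz by (simp add: field_simps)
  thus False using x_not_unit \<open>y \<in> L\<close> by simp
qed

lemma unit_not_Xi: "unitL u \<Longrightarrow> u \<notin> Xi"
proof
  assume u: "unitL u" "u \<in> Xi"
  then obtain y where "y \<in> L" "u = y * x" unfolding Xi_def by auto
  hence "1 = (y / u) * x" using unitL_nz[OF u(1)] by simp
  moreover have "y / u \<in> L" using \<open>y \<in> L\<close> L_mult unitL_inv[OF u(1)] unitL_L
    by (metis divide_inverse inverse_eq_divide)
  ultimately show False using one_not_Xi unfolding Xi_def by auto
qed

lemma Xi_prime: "primeideal Xi R"
proof -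
  interpret domain R by (rule L_domain)
  have Xi_eq: "Xi = PIdl\<^bsub>R\<^esub> x" unfolding Xi_def cgenideal_def by simp
  show ?thesis
  proof (rule primeidealI)
    show "ideal Xi R" unfolding Xi_eq by (rule cgenideal_ideal) (simp add: x_L)
    show "cring R" by (rule is_cring)
    show "carrier R \<noteq> Xi" using one_not_Xi S0 S_L by auto
  next
    fix a b assume ab: "a \<in> carrier R" "b \<in> carrier R" "a \<otimes>\<^bsub>R\<^esub> b \<in> Xi"
    have inX: "c \<in> Xi" if cL: "c \<in> L" and cnu: "\<not> unitL c" for c
    proof (cases "c = 0")
      case True thus ?thesis unfolding Xi_def using S0 S_L by force
    next
      case False
      obtain k u where ku: "unitL u" "c = x ^ k * u" using keyL[OF cL False] by blast
      have "k \<noteq> 0"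
      proof
        assume "k = 0" with ku have "c = u" by simp
        with ku(1) cnu show False by simp
      qed
      then obtain j where "k = Suc j" by (cases k) auto
      hence "c = (x ^ j * u) * x" using ku by (simp add: mult_ac)
      moreover have "x ^ j * u \<in> L" using L_mult L_pow x_L unitL_L ku by auto
      ultimately show ?thesis unfolding Xi_def by auto
    qed
    show "a \<in> Xi \<or> b \<in> Xi"
    proof (rule ccontr)
      assume "\<not> (a \<in> Xi \<or> b \<in> Xi)"
      hence "unitL a" "unitL b" using inX ab by auto
      hence "unitL (a * b)" by (rule unitL_mult)
      thus False using unit_not_Xi ab by simp
    qed
  qed
qed

lemma Xi_nz: "Xi \<noteq> {0}"
proof -
  have "1 * x \<in> Xi" unfolding Xi_def using S0 S_L by blast
  thus ?thesis using x_nz by auto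
qed

lemma prime_eq_Xi: assumes Q: "primeideal Q R" "Q \<noteq> {0}" shows "Q = Xi"
proof -
  interpret primeideal Q R by fact
  have QL: "Q \<subseteq> L" using a_subset by simp
  have nounit: "\<not> unitL u" if "u \<in> Q" for u
    using unit_in_ideal[OF is_ideal _ that] I_notcarr by auto
  have "0 \<in> Q" using additive_subgroup.zero_closed[OF is_additive_subgroup] by simp
  then obtain w where w: "w \<in> Q" "w \<noteq> 0" using Q(2) by blast
  obtain k u where ku: "unitL u" "w = x ^ k * u" using keyL[OF _ w(2)] w QL by blast
  have "x ^ k \<in> Q"
  proof -
    have "(1 / u) * (x ^ k * u) \<in> Q"
      using I_l_closed[of "x ^ k * u" "1 / u"] ku w unitL_inv[OF ku(1)] unitL_L by simp
    thus ?thesis using unitL_nz[OF ku(1)] by simp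
  qed
  have xQ: "x \<in> Q"
  proof -
    have "x ^ j \<in> Q \<Longrightarrow> x \<in> Q" for j
    proof (induction j)
      case 0 thus ?case using nounit unitL_1 by auto
    next
      case (Suc j)
      have "x \<otimes>\<^bsub>R\<^esub> x ^ j \<in> Q" using Suc.prems by simp
      from I_prime[OF _ _ this] show ?case using x_L L_pow Suc.IH by auto
    qed
    thus ?thesis using \<open>x ^ k \<in> Q\<close> by blast
  qed
  show ?thesis
  proof
    show "Xi \<subseteq> Q" unfolding Xi_def using I_l_closed[OF xQ] by auto
  next
    show "Q \<subseteq> Xi"
    proof
      fix z assume z: "z \<in> Q"
      show "z \<in> Xi"
      proof (cases "z = 0")
        case True thus ?thesis unfolding Xi_def using S0 S_L by force
      next
        case False
        obtain j v where jv: "unitL v" "z = x ^ j * v" using keyL[OF _ False] z QL by blast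
        have "j \<noteq> 0"
        proof
          assume "j = 0" with jv have "z = v" by simp
          with jv(1) nounit[OF z] show False by simp
        qed
        then obtain i where "j = Suc i" by (cases j) auto
        hence "z = (x ^ i * v) * x" using jv by (simp add: mult_ac)
        moreover have "x ^ i * v \<in> L" using L_mult L_pow x_L unitL_L jv by auto
        ultimately show ?thesis unfolding Xi_def by auto
      qed
    qed
  qed
qed

theorem DVR_L: "DVR R"
  unfolding DVR_def
proof (rule conjI[OF principal], rule ex1I[of _ Xi])
  show "primeideal Xi R \<and> Xi \<noteq> {\<zero>\<^bsub>R\<^esub>}" using Xi_prime Xi_nz by simp
next
  fix Q assume "primeideal Q R \<and> Q \<noteq> {\<zero>\<^bsub>R\<^esub>}"
  thus "Q = Xi" using prime_eq_Xi by simp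
qed

end



lemma mp_add: "map_poly (of_int::int\<Rightarrow>real) (p + q) = map_poly of_int p + map_poly of_int q"
  by (rule poly_eqI) (simp add: coeff_map_poly)
lemma mp_diff: "map_poly (of_int::int\<Rightarrow>real) (p - q) = map_poly of_int p - map_poly of_int q"
  by (rule poly_eqI) (simp add: coeff_map_poly)
lemma mp_neg: "map_poly (of_int::int\<Rightarrow>real) (- p) = - map_poly of_int p"
  by (rule poly_eqI) (simp add: coeff_map_poly)
lemma mp_smult: "map_poly (of_int::int\<Rightarrow>real) (Polynomial.smult a q) = Polynomial.smult (of_int a) (map_poly of_int q)"
  by (rule poly_eqI) (simp add: coeff_map_poly)
lemma mp_mult: "map_poly (of_int::int\<Rightarrow>real) (p * q) = map_poly of_int p * map_poly of_int q"
  by (induction p) (simp_all add: mp_add mp_smult map_poly_pCons)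
lemma mp_const: "map_poly (of_int::int\<Rightarrow>real) [:c:] = [:of_int c:]"
  by (simp add: map_poly_pCons)
lemma mp_X: "map_poly (of_int::int\<Rightarrow>real) [:0, 1:] = [:0, 1:]"
  by (simp add: map_poly_pCons)

lemma Zadj_add: assumes "a \<in> Zadj x" "b \<in> Zadj x" shows "a + b \<in> Zadj x"
proof -
  obtain q1 q2 where "a = poly (map_poly real_of_int q1) x" "b = poly (map_poly real_of_int q2) x"
    using assms unfolding Zadj_def by blast
  hence "a + b = poly (map_poly real_of_int (q1 + q2)) x" by (simp add: mp_add)
  thus ?thesis unfolding Zadj_def by blast
qed

lemma Zadj_mult: assumes "a \<in> Zadj x" "b \<in> Zadj x" shows "a * b \<in> Zadj x"
proof -
  obtain q1 q2 where "a = poly (map_poly real_of_int q1) x" "b = poly (map_poly real_of_int q2) x"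
    using assms unfolding Zadj_def by blast
  hence "a * b = poly (map_poly real_of_int (q1 * q2)) x" by (simp add: mp_mult)
  thus ?thesis unfolding Zadj_def by blast
qed

lemma Zadj_neg: assumes "a \<in> Zadj x" shows "- a \<in> Zadj x"
proof -
  obtain q1 where "a = poly (map_poly real_of_int q1) x"
    using assms unfolding Zadj_def by blast
  hence "- a = poly (map_poly real_of_int (- q1)) x" by (simp add: mp_neg)
  thus ?thesis unfolding Zadj_def by blast
qed

lemma Zadj_int: "of_int c \<in> Zadj x"
  unfolding Zadj_def by (auto intro!: exI[of _ "[:c:]"] simp: mp_const)

lemma Zadj_x: "x \<in> Zadj x"
  unfolding Zadj_def by (auto intro!: exI[of _ "[:0, 1:]"] simp: mp_X)

fun hh :: "int \<Rightarrow> nat \<Rightarrow> int poly" where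
  "hh nu 0 = [:0, 1:]"
| "hh nu (Suc j) = hh nu j ^ 2 - [:nu:]"

lemma hh_deg: "degree (hh nu j) = 2 ^ j \<and> lead_coeff (hh nu j) = 1"
proof (induction j)
  case 0 thus ?case by simp
next
  case (Suc j)
  let ?h = "hh nu j"
  have h0: "?h \<noteq> 0" using Suc by auto
  have d2: "degree (?h ^ 2) = 2 ^ Suc j" using Suc by (simp add: degree_power_eq[OF h0])
  have l2: "lead_coeff (?h ^ 2) = 1" using Suc.IH by (metis lead_coeff_power power_one)
  have e: "hh nu (Suc j) = ?h ^ 2 + [:- nu:]" by simp
  have lt: "degree [:- nu:] < degree (?h ^ 2)" using d2 by simp
  have dd: "degree (?h ^ 2 + [:- nu:]) = 2 ^ Suc j" using degree_add_eq_left[OF lt] d2 by simp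
  have "lead_coeff ([:- nu:] + ?h ^ 2) = lead_coeff (?h ^ 2)" by (rule lead_coeff_add_le[OF lt])
  hence ll: "lead_coeff (?h ^ 2 + [:- nu:]) = 1" using l2 by (metis add.commute)
  show ?case unfolding e using dd ll by blast
qed

lemma nest_nonneg: "nu \<ge> 0 \<Longrightarrow> nest nu k \<ge> 0"
  by (induction k) auto

lemma nest_sq: "nu \<ge> 0 \<Longrightarrow> nest nu (Suc k) ^ 2 = of_int nu + nest nu k"
  using nest_nonneg[of nu k] by simp

lemma hh_eval: assumes "nu \<ge> 0" "j \<le> n"
  shows "poly (map_poly of_int (hh nu j)) (nest nu n) = nest nu (n - j)"
  using assms(2)
proof (induction j)
  case 0 thus ?case by (simp add: mp_X)
next
  case (Suc j)
  then obtain m where m: "n - j = Suc m" by (metis Suc_diff_le Suc_le_D diff_Suc_Suc diff_zero le_refl)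
  have "n - Suc j = m" using m by simp
  moreover have "poly (map_poly of_int (hh nu (Suc j))) (nest nu n) = nest nu (n - j) ^ 2 - of_int nu"
    using Suc by (simp add: mp_diff mp_mult power2_eq_square mp_const)
  ultimately show ?case using m nest_sq[OF assms(1), of m] by simp
qed



lemma Zadj_repr:
  fixes h :: "int poly"
  assumes a: "a \<in> Zadj x" and h: "degree h = N" "lead_coeff h = 1" "poly (map_poly of_int h) x = 0"
    and N: "N > 0"
  shows "\<exists>c::nat \<Rightarrow> int. a = (\<Sum>i<N. of_int (c i) * x ^ i)"
proof -
  obtain q where q: "a = poly (map_poly real_of_int q) x" using a unfolding Zadj_def by blast
  obtain d r where dr: "pseudo_divmod q h = (d, r)" by (metis surj_pair)
  have h0: "h \<noteq> 0" using h by auto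
  have "Polynomial.smult (Polynomial.coeff h (degree h) ^ (Suc (degree q) - degree h)) q = h * d + r"
    by (rule pseudo_divmod(1)[OF h0 dr])
  hence qe: "q = h * d + r" using h by simp
  have rdeg: "degree r < N" using pseudo_divmod(2)[OF h0 dr] h N by auto
  have "a = poly (map_poly real_of_int r) x" using q qe h(3) by (simp add: mp_add mp_mult)
  also have "\<dots> = (\<Sum>i\<le>degree (map_poly real_of_int r). Polynomial.coeff (map_poly real_of_int r) i * x ^ i)"
    by (rule poly_altdef)
  also have "\<dots> = (\<Sum>i<N. Polynomial.coeff (map_poly real_of_int r) i * x ^ i)"
  proof (rule sum.mono_neutral_left)
    show "{..degree (map_poly real_of_int r)} \<subseteq> {..<N}"
      using map_poly_degree_leq[of real_of_int r] rdeg by auto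
  next
    show "\<forall>i\<in>{..<N} - {..degree (map_poly real_of_int r)}. Polynomial.coeff (map_poly real_of_int r) i * x ^ i = 0"
      by (auto simp: coeff_eq_0)
  qed simp
  also have "\<dots> = (\<Sum>i<N. of_int (Polynomial.coeff r i) * x ^ i)" by (simp add: coeff_map_poly)
  finally show ?thesis by blast
qed

declare nest.simps(2)[simp del]

locale LLn = LL +
  fixes nu :: int and n :: nat
  assumes S_def: "S = Zadj (nest nu n)" and nu0: "nu \<ge> 0" and nu_P: "of_int nu \<in> P"
begin

lemma nest_S: "j \<le> n \<Longrightarrow> nest nu (n - j) \<in> S"
proof (induction j)
  case 0 thus ?case using S_def Zadj_x by simp
next
  case (Suc j)
  then obtain m where m: "n - j = Suc m" by (metis Suc_diff_le Suc_le_D diff_Suc_Suc diff_zero le_refl)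
  have m2: "n - Suc j = m" using m by simp
  have eq: "nest nu (n - Suc j) = nest nu (n - j) ^ 2 + of_int (- nu)"
    unfolding m2 m nest_sq[OF nu0, of m] by simp
  have A: "nest nu (n - j) \<in> S" using Suc by simp
  have "nest nu (n - j) ^ 2 + of_int (- nu) \<in> S" by (rule S_add[OF S_pow[OF A] S_int])
  thus ?case using eq by metis
qed

lemma nest_S': "k \<le> n \<Longrightarrow> nest nu k \<in> S"
  using nest_S[of "n - k"] by simp

lemma nest_P: "1 \<le> k \<Longrightarrow> k \<le> n \<Longrightarrow> nest nu k \<in> P"
proof (induction k)
  case 0 thus ?case by simp
next
  case (Suc k)
  have "nest nu (Suc k) ^ 2 \<in> P"
  proof (cases k)
    case 0 thus ?thesis using nest_sq[OF nu0, of 0] nu_P by (simp del: nest.simps(2))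
  next
    case (Suc k')
    hence "nest nu k \<in> P" using Suc.IH Suc.prems by simp
    thus ?thesis using nest_sq[OF nu0, of k] P_add[OF nu_P] by metis
  qed
  thus ?case using P_pow_rev nest_S' Suc.prems by blast
qed

end

locale LLc = LLx S P x + LLn S P nu n for S P x nu n +
  fixes p :: int
  assumes x_def: "x = nest nu n" and n1: "n \<ge> 1"
    and p_prime: "Factorial_Ring.prime p" and p_nu: "p dvd nu" and p2_nu: "\<not> p ^ 2 dvd nu"
    and int_P: "\<And>c. of_int c \<in> P \<longleftrightarrow> p dvd c"
begin

lemma nu_val: "1 \<le> k \<Longrightarrow> k \<le> n \<Longrightarrow> \<exists>U. unitL U \<and> of_int nu = nest nu k ^ (2 ^ k) * U"
proof (induction k)
  case 0 thus ?case by simp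
next
  case (Suc k)
  show ?case
  proof (cases k)
    case 0 thus ?thesis using nest_sq[OF nu0, of 0] unitL_1 by (intro exI[of _ 1]) (auto simp del: nest.simps(2))
  next
    case (Suc k')
    let ?y = "nest nu k" and ?z = "nest nu (Suc k)"
    obtain U where U: "unitL U" "of_int nu = ?y ^ (2 ^ k) * U" using Suc.IH Suc.prems \<open>k = Suc k'\<close> by auto
    have yP: "?y \<in> P" using nest_P Suc.prems \<open>k = Suc k'\<close> by simp
    have yL: "?y \<in> L" using nest_S' Suc.prems S_L by simp
    have "(2::nat) ^ k \<ge> 2" using \<open>k = Suc k'\<close> by simp
    then obtain d where d: "(2::nat) ^ k = Suc (Suc d)" by (metis add_2_eq_Suc le_add_diff_inverse)
    define W where "W = 1 + ?y * (?y ^ d * U)"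
    have W: "unitL W" unfolding W_def
      by (rule unitL_add[OF unitL_1 _ yP]) (use L_mult L_pow yL unitL_L U in auto)
    have z2: "?z ^ 2 = ?y * W"
      using nest_sq[OF nu0, of k] U(2) d by (simp add: W_def algebra_simps)
    have "?z ^ (2 ^ Suc k) = (?z ^ 2) ^ (2 ^ k)" by (simp add: power_mult[symmetric] mult.commute)
    also have "\<dots> = ?y ^ (2 ^ k) * W ^ (2 ^ k)" by (simp add: z2 power_mult_distrib)
    finally have "of_int nu = ?z ^ (2 ^ Suc k) * (U / W ^ (2 ^ k))"
      using U(2) unitL_nz[OF unitL_pow[OF W, of "2 ^ k"]] by (simp add: field_simps)
    moreover have "unitL (U / W ^ (2 ^ k))" using unitL_div unitL_pow U W by auto
    ultimately show ?thesis by blast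
  qed
qed

definition N where "N = (2::nat) ^ n"

lemma N_ge: "N \<ge> 2"
proof -
  have "(2::nat) ^ 1 \<le> 2 ^ n" using n1 by (rule power_increasing) simp
  thus ?thesis unfolding N_def by simp
qed

lemma p_val: "VF (of_int p) N"
proof -
  obtain U where U: "unitL U" "of_int nu = x ^ N * U" using nu_val[OF n1 order_refl] x_def N_def by auto
  obtain m where m: "nu = p * m" using p_nu by blast
  have "\<not> p dvd m" using p2_nu m by (auto simp: power2_eq_square)
  hence mu: "unitL (of_int m)" using int_P S_int unitL_S by auto
  have pnz: "p \<noteq> 0" using p_prime by auto
  have "of_int p = x ^ N * (U / of_int m)" using U(2) m unitL_nz[OF mu] by (simp add: field_simps)
  thus ?thesis unfolding VF_def using unitL_div[OF U(1) mu] by blast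
qed

lemma int_val: "c \<noteq> 0 \<Longrightarrow> \<exists>e. VF (of_int c) (N * e)"
proof (induction c rule: measure_induct_rule[where f="\<lambda>c. nat \<bar>c\<bar>"])
  case (less c)
  show ?case
  proof (cases "p dvd c")
    case True
    then obtain c' where c': "c = p * c'" by blast
    have "c' \<noteq> 0" using less.prems c' by auto
    have "\<bar>p\<bar> \<ge> 2" using prime_gt_1_int[OF p_prime] by simp
    hence "\<bar>c'\<bar> < \<bar>c\<bar>" using c' \<open>c' \<noteq> 0\<close> by (auto simp: abs_mult)
    hence "nat \<bar>c'\<bar> < nat \<bar>c\<bar>" by simp
    then obtain e where "VF (of_int c') (N * e)" using less.IH[of c'] \<open>c' \<noteq> 0\<close> by auto
    hence "VF (of_int p * of_int c') (N + N * e)" using VF_mult p_val by blast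
    thus ?thesis using c' by (intro exI[of _ "Suc e"]) auto
  next
    case False
    hence "unitL (of_int c)" using int_P S_int unitL_S by auto
    thus ?thesis using VF_unit by (intro exI[of _ 0]) auto
  qed
qed

lemma key_c: assumes "a \<in> S" "a \<noteq> 0" shows "\<exists>m. VF a m"
proof -
  have hd: "degree (hh nu n) = N" "lead_coeff (hh nu n) = 1" unfolding N_def using hh_deg[of nu n] by blast+
  have he: "poly (map_poly of_int (hh nu n)) x = 0" using hh_eval[OF nu0 order_refl] x_def by simp
  obtain c where c: "a = (\<Sum>i<N. of_int (c i) * x ^ i)"
    using Zadj_repr[OF _ hd he] assms S_def N_ge x_def by auto
  define I where "I = {i. i < N \<and> c i \<noteq> 0}"
  have aI: "a = (\<Sum>i\<in>I. of_int (c i) * x ^ i)" unfolding c I_def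
    by (rule sum.mono_neutral_right) auto
  have "I \<noteq> {}" using aI assms by auto
  have "\<forall>i\<in>I. \<exists>e. VF (of_int (c i)) (N * e)" using int_val I_def by auto
  then obtain e where e: "\<And>i. i \<in> I \<Longrightarrow> VF (of_int (c i)) (N * e i)" by metis
  have VFt: "VF (of_int (c i) * x ^ i) (N * e i + i)" if "i \<in> I" for i
    using VF_mult[OF e[OF that], of "x ^ i" i] unitL_1 unfolding VF_def by auto
  have inj: "inj_on (\<lambda>i. N * e i + i) I"
  proof (rule inj_onI)
    fix i j assume ij: "i \<in> I" "j \<in> I" "N * e i + i = N * e j + j"
    have "i < N" "j < N" using ij I_def by auto
    hence "(N * e i + i) mod N = i" "(N * e j + j) mod N = j" by simp_all
    thus "i = j" using ij(3) by metis
  qed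
  obtain m where "VF (\<Sum>i\<in>I. of_int (c i) * x ^ i) m"
    using VF_sum[OF _ \<open>I \<noteq> {}\<close> VFt inj] I_def by auto
  thus ?thesis using aI by auto
qed

end



theorem lemma4p3:
  fixes nu p :: int and n :: nat and P :: "real set"
  assumes "nu \<ge> 3" and "squarefree nu" and "nu mod 4 = 2 \<or> nu mod 4 = 3"
    and "n \<ge> 1" and "Factorial_Ring.prime p" and "p dvd nu"
    and "maximalideal P (ring_of (Zadj (nest nu n)))"
    and "P \<inter> \<int> = {real_of_int (p * k) | k. True}"
  shows "DVR (ring_of (localization (Zadj (nest nu n)) P))"
proof -
  define x where "x = nest nu n"
  define S where "S = Zadj x"
  have int_P: "of_int c \<in> P \<longleftrightarrow> p dvd c" for c
  proof -
    have "of_int c \<in> P \<longleftrightarrow> of_int c \<in> P \<inter> \<int>" by auto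
    also have "\<dots> \<longleftrightarrow> (\<exists>k. (of_int c :: real) = of_int (p * k))" using assms(8) by auto
    also have "\<dots> \<longleftrightarrow> p dvd c" by (auto simp: dvd_def simp del: of_int_mult)
    finally show ?thesis .
  qed
  have domS: "domain (ring_of S)" unfolding S_def
    by (rule real_domain) (auto simp: Zadj_add Zadj_mult Zadj_neg Zadj_int[of 0, simplified] Zadj_int[of 1, simplified])
  interpret dS: domain "ring_of S" by (rule domS)
  have maxP: "maximalideal P (ring_of S)" using assms(7) unfolding S_def x_def .
  have primeP: "primeideal P (ring_of S)" by (rule dS.maximalideal_prime[OF maxP])
  interpret pP: primeideal P "ring_of S" by (rule primeP)
  have rs: "carrier (ring_of S) = S" "mult (ring_of S) = (*)" "add (ring_of S) = (+)" "zero (ring_of S) = 0"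
    by (auto simp: ring_of_def)
  have PS: "P \<subseteq> S" using pP.a_subset rs by simp
  have Pmult: "a \<in> P \<Longrightarrow> s \<in> S \<Longrightarrow> s * a \<in> P" for a s using pP.I_l_closed[of a s] rs by simp
  have m1S: "(-1::real) \<in> S" unfolding S_def using Zadj_int[of "-1"] by simp
  interpret LL S P
  proof
    show "a \<in> S \<Longrightarrow> b \<in> S \<Longrightarrow> a + b \<in> S" for a b unfolding S_def by (rule Zadj_add)
    show "a \<in> S \<Longrightarrow> b \<in> S \<Longrightarrow> a * b \<in> S" for a b unfolding S_def by (rule Zadj_mult)
    show "a \<in> S \<Longrightarrow> - a \<in> S" for a unfolding S_def by (rule Zadj_neg)
    show "of_int c \<in> S" for c unfolding S_def by (rule Zadj_int)
    show "P \<subseteq> S" by (rule PS)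
    show "a \<in> P \<Longrightarrow> b \<in> P \<Longrightarrow> a + b \<in> P" for a b using pP.a_closed[of a b] rs by simp
    show "a \<in> P \<Longrightarrow> - a \<in> P" for a using Pmult[OF _ m1S] by simp
    show "a \<in> P \<Longrightarrow> s \<in> S \<Longrightarrow> s * a \<in> P" for a s by (rule Pmult)
    show "a \<in> S \<Longrightarrow> b \<in> S \<Longrightarrow> a * b \<in> P \<Longrightarrow> a \<in> P \<or> b \<in> P" for a b
      using pP.I_prime[of a b] rs by simp
    show "1 \<notin> P" using int_P[of 1] assms(5) by (metis of_int_1 not_prime_unit)
    show "0 \<in> P" using int_P[of 0] by simp
  qed
  have nu_P: "of_int nu \<in> P" using int_P assms(6) by simp
  interpret LLn S P nu n
    by unfold_locales (use S_def x_def nu_P assms(1) in auto)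
  have xP: "x \<in> P" using nest_P[OF assms(4) order_refl] x_def by simp
  have xnz: "x \<noteq> 0"
  proof -
    obtain m where "n = Suc m" using assms(4) by (cases n) auto
    hence "x = sqrt (of_int nu + nest nu m)" unfolding x_def by (simp add: nest.simps(2))
    moreover have "of_int nu + nest nu m > 0" using nest_nonneg[of nu m] assms(1) by simp
    ultimately show ?thesis by simp
  qed
  have p2: "\<not> p ^ 2 dvd nu"
    using squarefreeD[OF assms(2)] assms(5) by (metis not_prime_unit)
  interpret LLc S P x nu n p
    by unfold_locales (use xP xnz x_def assms(4,5,6) p2 int_P in auto)
  interpret LLd S P x
    by unfold_locales (rule key_c)
  show ?thesis using DVR_L unfolding S_def x_def .
qed


end
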